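(* For all $i,j,k,l\in\{1,\dots,\dim\theta\}$, $$\Big|[\mathrm{Cov}(\hat{\mathcal{I}}_1(\theta))]^{ijkl}\Big|\le\frac1N\|\partial_ih_L(x)\|_2\,\|\partial_jh_L(x)\|_2\,\|\partial_kh_L(x)\|_2\,\|\partial_lh_L(x)\|_2\,\big\|\mathcal{K}(t)-\mathcal{I}(h_L)\otimes\mathcal{I}(h_L)\big\|_F .$$
   Context: Setup. Fix an input $x\in\mathbb{R}^{n_0}$ and integers $L\ge1$, $n_1,\dots,n_L\ge1$. Network. The parameters are $\theta=(W_0,\dots,W_{L-1})$, with $W_l\in\mathbb{R}^{n_{l+1}\times(n_l+1)}$, viewed as a vector in $\mathbb{R}^{\dim\theta}$. Let $\sigma$ be differentiable and applied entrywise. Set $h_0=x$ and $\bar h_l=(h_l^\top,1)^\top$. For $1\le l\le L-1$ let $h_l=\sigma(W_{l-1}\bar h_{l-1})$, and let $h_L=W_{L-1}\bar h_{L-1}\in\mathbb{R}^{n_L}$. Exponential family. The model is $p(y\mid x,\theta)=\exp(t(y)^\top h_L-F(h_L))$ with respect to a base measure $\nu$, where $t(y)\in\mathbb{R}^{n_L}$ and $F(h)=\log\int\exp(t(y)^\top h)\,d\nu(y)$. Assume $h_L$ lies in the interior of the natural parameter space. Let $\eta=\mathbb{E}[t(y)]$ and $\mathcal{I}(h_L)=\mathrm{Cov}(t(y))$, with $y\sim p(y\mid x,\theta)$. Estimator. With $N$ i.i.d. samples $y_i\sim p(y\mid x,\theta)$ and $\ell_i=\log p(y_i\mid x,\theta)$,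 let $\hat{\mathcal{I}}_1(\theta)=\frac1N\sum_i\frac{\partial\ell_i}{\partial\theta}\frac{\partial\ell_i}{\partial\theta^\top}$. Notation. $[\mathrm{Cov}(\hat{\mathcal{I}}_1)]^{ijkl}=\mathrm{Cov}(\hat{\mathcal{I}}_1^{ij},\hat{\mathcal{I}}_1^{kl})$. $\partial_ih_L=\partial h_L/\partial\theta_i\in\mathbb{R}^{n_L}$. $\mathcal{K}_{abcd}(t)=\mathbb{E}[\prod_{e\in\{a,b,c,d\}}(t_e-\eta_e)]$. $(\mathcal{I}\otimes\mathcal{I})_{abcd}=\mathcal{I}_{ab}\mathcal{I}_{cd}$. $\|\cdot\|_F$ is the square root of the sum of squared entries. *)

theory Defs
  imports "HOL-Probability.Probability"
begin

(* Vectors in R^m are represented as functions nat => real; only coordinates a < m matter. *)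

definition dotn :: "nat \<Rightarrow> (nat \<Rightarrow> real) \<Rightarrow> (nat \<Rightarrow> real) \<Rightarrow> real" where
  "dotn m u v = (\<Sum>a<m. u a * v a)"

definition norm2n :: "nat \<Rightarrow> (nat \<Rightarrow> real) \<Rightarrow> real" where
  "norm2n m u = sqrt (\<Sum>a<m. (u a)\<^sup>2)"

definition frob4 :: "nat \<Rightarrow> (nat \<Rightarrow> nat \<Rightarrow> nat \<Rightarrow> nat \<Rightarrow> real) \<Rightarrow> real" where
  "frob4 m T = sqrt (\<Sum>a<m. \<Sum>b<m. \<Sum>c<m. \<Sum>d<m. (T a b c d)\<^sup>2)"

(* Parameter index set: theta_(l,r,c) = (W_l)_{r,c}, l < L, r < n_(l+1), c \<le> n_l
   (column c = n_l is the bias column). *)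
definition params :: "(nat \<Rightarrow> nat) \<Rightarrow> nat \<Rightarrow> (nat \<times> nat \<times> nat) set" where
  "params n L = {(l, r, c). l < L \<and> r < n (Suc l) \<and> c \<le> n l}"

definition preact :: "(nat \<Rightarrow> nat) \<Rightarrow> (nat \<times> nat \<times> nat \<Rightarrow> real) \<Rightarrow> nat \<Rightarrow> (nat \<Rightarrow> real) \<Rightarrow> nat \<Rightarrow> real" where
  "preact n \<theta> l h r = (\<Sum>c<n l. \<theta> (l, r, c) * h c) + \<theta> (l, r, n l)"

primrec hid :: "(nat \<Rightarrow> nat) \<Rightarrow> (real \<Rightarrow> real) \<Rightarrow> (nat \<Rightarrow> real) \<Rightarrow> (nat \<times> nat \<times> nat \<Rightarrow> real)
    \<Rightarrow> nat \<Rightarrow> nat \<Rightarrow> real" where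
  "hid n \<sigma> x \<theta> 0 = x"
| "hid n \<sigma> x \<theta> (Suc l) = (\<lambda>r. \<sigma> (preact n \<theta> l (hid n \<sigma> x \<theta> l) r))"

definition net_out :: "(nat \<Rightarrow> nat) \<Rightarrow> (real \<Rightarrow> real) \<Rightarrow> nat \<Rightarrow> (nat \<Rightarrow> real)
    \<Rightarrow> (nat \<times> nat \<times> nat \<Rightarrow> real) \<Rightarrow> nat \<Rightarrow> real" where
  "net_out n \<sigma> L x \<theta> = preact n \<theta> (L - 1) (hid n \<sigma> x \<theta> (L - 1))"

definition pderiv_param :: "((nat \<times> nat \<times> nat \<Rightarrow> real) \<Rightarrow> real) \<Rightarrow> (nat \<times> nat \<times> nat \<Rightarrow> real)
    \<Rightarrow> nat \<times> nat \<times> nat \<Rightarrow> real" where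
  "pderiv_param f \<theta> p = deriv (\<lambda>e. f (\<theta>(p := \<theta> p + e))) 0"

definition jac_col :: "(nat \<Rightarrow> nat) \<Rightarrow> (real \<Rightarrow> real) \<Rightarrow> nat \<Rightarrow> (nat \<Rightarrow> real)
    \<Rightarrow> (nat \<times> nat \<times> nat \<Rightarrow> real) \<Rightarrow> nat \<times> nat \<times> nat \<Rightarrow> nat \<Rightarrow> real" where
  "jac_col n \<sigma> L x \<theta> p = (\<lambda>a. pderiv_param (\<lambda>\<theta>'. net_out n \<sigma> L x \<theta>' a) \<theta> p)"

definition nat_param_space :: "'y measure \<Rightarrow> ('y \<Rightarrow> nat \<Rightarrow> real) \<Rightarrow> nat \<Rightarrow> (nat \<Rightarrow> real) set" where
  "nat_param_space \<nu> t m = {h. (\<integral>\<^sup>+ y. ennreal (exp (dotn m (t y) h)) \<partial>\<nu>) < \<infinity>}"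

definition in_interior_coords :: "nat \<Rightarrow> (nat \<Rightarrow> real) set \<Rightarrow> (nat \<Rightarrow> real) \<Rightarrow> bool" where
  "in_interior_coords m S h = (\<exists>e>0. \<forall>h'. (\<forall>a<m. \<bar>h' a - h a\<bar> < e) \<longrightarrow> h' \<in> S)"

definition log_partition :: "'y measure \<Rightarrow> ('y \<Rightarrow> nat \<Rightarrow> real) \<Rightarrow> nat \<Rightarrow> (nat \<Rightarrow> real) \<Rightarrow> real" where
  "log_partition \<nu> t m h = ln (\<integral> y. exp (dotn m (t y) h) \<partial>\<nu>)"

definition expfam_density :: "'y measure \<Rightarrow> ('y \<Rightarrow> nat \<Rightarrow> real) \<Rightarrow> nat \<Rightarrow> (nat \<Rightarrow> real) \<Rightarrow> 'y \<Rightarrow> real" where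
  "expfam_density \<nu> t m h y = exp (dotn m (t y) h - log_partition \<nu> t m h)"

definition expfam_measure :: "'y measure \<Rightarrow> ('y \<Rightarrow> nat \<Rightarrow> real) \<Rightarrow> nat \<Rightarrow> (nat \<Rightarrow> real) \<Rightarrow> 'y measure" where
  "expfam_measure \<nu> t m h = density \<nu> (\<lambda>y. ennreal (expfam_density \<nu> t m h y))"

definition suff_mean :: "'y measure \<Rightarrow> ('y \<Rightarrow> nat \<Rightarrow> real) \<Rightarrow> nat \<Rightarrow> (nat \<Rightarrow> real) \<Rightarrow> nat \<Rightarrow> real" where
  "suff_mean \<nu> t m h a = (\<integral> y. t y a \<partial>(expfam_measure \<nu> t m h))"

definition suff_cov :: "'y measure \<Rightarrow> ('y \<Rightarrow> nat \<Rightarrow> real) \<Rightarrow> nat \<Rightarrow> (nat \<Rightarrow> real) \<Rightarrow> nat \<Rightarrow> nat \<Rightarrow> real" where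
  "suff_cov \<nu> t m h a b = (\<integral> y. (t y a - suff_mean \<nu> t m h a) * (t y b - suff_mean \<nu> t m h b)
      \<partial>(expfam_measure \<nu> t m h))"

definition suff_K :: "'y measure \<Rightarrow> ('y \<Rightarrow> nat \<Rightarrow> real) \<Rightarrow> nat \<Rightarrow> (nat \<Rightarrow> real)
    \<Rightarrow> nat \<Rightarrow> nat \<Rightarrow> nat \<Rightarrow> nat \<Rightarrow> real" where
  "suff_K \<nu> t m h a b c d = (\<integral> y. (t y a - suff_mean \<nu> t m h a) * (t y b - suff_mean \<nu> t m h b)
      * (t y c - suff_mean \<nu> t m h c) * (t y d - suff_mean \<nu> t m h d) \<partial>(expfam_measure \<nu> t m h))"

definition net_model :: "'y measure \<Rightarrow> ('y \<Rightarrow> nat \<Rightarrow> real) \<Rightarrow> (nat \<Rightarrow> nat) \<Rightarrow> (real \<Rightarrow> real) \<Rightarrow> nat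
    \<Rightarrow> (nat \<Rightarrow> real) \<Rightarrow> (nat \<times> nat \<times> nat \<Rightarrow> real) \<Rightarrow> 'y measure" where
  "net_model \<nu> t n \<sigma> L x \<theta> = expfam_measure \<nu> t (n L) (net_out n \<sigma> L x \<theta>)"

definition loglik :: "'y measure \<Rightarrow> ('y \<Rightarrow> nat \<Rightarrow> real) \<Rightarrow> (nat \<Rightarrow> nat) \<Rightarrow> (real \<Rightarrow> real) \<Rightarrow> nat
    \<Rightarrow> (nat \<Rightarrow> real) \<Rightarrow> (nat \<times> nat \<times> nat \<Rightarrow> real) \<Rightarrow> 'y \<Rightarrow> real" where
  "loglik \<nu> t n \<sigma> L x \<theta> y = ln (expfam_density \<nu> t (n L) (net_out n \<sigma> L x \<theta>) y)"

definition emp_fisher :: "nat \<Rightarrow> 'y measure \<Rightarrow> ('y \<Rightarrow> nat \<Rightarrow> real) \<Rightarrow> (nat \<Rightarrow> nat) \<Rightarrow> (real \<Rightarrow> real) \<Rightarrow> nat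
    \<Rightarrow> (nat \<Rightarrow> real) \<Rightarrow> (nat \<times> nat \<times> nat \<Rightarrow> real) \<Rightarrow> (nat \<Rightarrow> 'y)
    \<Rightarrow> nat \<times> nat \<times> nat \<Rightarrow> nat \<times> nat \<times> nat \<Rightarrow> real" where
  "emp_fisher N \<nu> t n \<sigma> L x \<theta> ys p q =
     (1 / real N) * (\<Sum>s<N. pderiv_param (\<lambda>\<theta>'. loglik \<nu> t n \<sigma> L x \<theta>' (ys s)) \<theta> p
                          * pderiv_param (\<lambda>\<theta>'. loglik \<nu> t n \<sigma> L x \<theta>' (ys s)) \<theta> q)"

definition covar :: "'a measure \<Rightarrow> ('a \<Rightarrow> real) \<Rightarrow> ('a \<Rightarrow> real) \<Rightarrow> real" where
  "covar Q X Y = (\<integral> \<omega>. (X \<omega> - (\<integral> \<omega>'. X \<omega>' \<partial>Q)) * (Y \<omega> - (\<integral> \<omega>'. Y \<omega>' \<partial>Q)) \<partial>Q)"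

end

theory Submission
  imports Defs
begin

lemma cs_set:
  fixes f g :: "'a \<Rightarrow> real"
  shows "\<bar>\<Sum>x\<in>A. f x * g x\<bar> \<le> sqrt (\<Sum>x\<in>A. (f x)\<^sup>2) * sqrt (\<Sum>x\<in>A. (g x)\<^sup>2)"
proof -
  have "(\<Sum>x\<in>A. f x * g x)\<^sup>2 \<le> (\<Sum>x\<in>A. (f x)\<^sup>2) * (\<Sum>x\<in>A. (g x)\<^sup>2)"
    by (rule Cauchy_Schwarz_ineq_sum)
  then have "sqrt ((\<Sum>x\<in>A. f x * g x)\<^sup>2) \<le> sqrt ((\<Sum>x\<in>A. (f x)\<^sup>2) * (\<Sum>x\<in>A. (g x)\<^sup>2))"
    using real_sqrt_le_mono by blast
  then show ?thesis by (simp add: real_sqrt_mult)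
qed

lemma nest4: "(\<Sum>a<m. \<Sum>b<m. \<Sum>c<m. \<Sum>d<m. F a b c d) =
   (\<Sum>(a,b,c,d)\<in>{..<m::nat} \<times> {..<m} \<times> {..<m} \<times> {..<m}. (F a b c d :: real))"
  by (simp add: sum.cartesian_product)

lemma tensor_cs:
  "\<bar>\<Sum>a<m. \<Sum>b<m. \<Sum>c<m. \<Sum>d<m. T a b c d * (u a * v b * w c * z d)\<bar>
   \<le> norm2n m u * norm2n m v * norm2n m w * norm2n m z * frob4 m T"
proof -
  let ?Q = "{..<m::nat} \<times> {..<m} \<times> {..<m} \<times> {..<m}"
  let ?f = "\<lambda>(a,b,c,d). T a b c d"
  let ?g = "\<lambda>(a,b,c,d). u a * v b * w c * z d"
  have e1: "(\<Sum>a<m. \<Sum>b<m. \<Sum>c<m. \<Sum>d<m. T a b c d * (u a * v b * w c * z d)) = (\<Sum>q\<in>?Q. ?f q * ?g q)"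
    by (subst nest4) (auto intro!: sum.cong)
  have e2: "(\<Sum>q\<in>?Q. (?f q)\<^sup>2) = (\<Sum>a<m. \<Sum>b<m. \<Sum>c<m. \<Sum>d<m. (T a b c d)\<^sup>2)"
    by (subst nest4) (auto intro!: sum.cong)
  have e3: "(\<Sum>q\<in>?Q. (?g q)\<^sup>2) = (\<Sum>a<m. \<Sum>b<m. \<Sum>c<m. \<Sum>d<m. (u a * v b * w c * z d)\<^sup>2)"
    by (subst nest4) (auto intro!: sum.cong)
  have e4: "(\<Sum>a<m. \<Sum>b<m. \<Sum>c<m. \<Sum>d<m. (u a * v b * w c * z d)\<^sup>2)
      = (\<Sum>a<m. (u a)\<^sup>2) * (\<Sum>b<m. (v b)\<^sup>2) * (\<Sum>c<m. (w c)\<^sup>2) * (\<Sum>d<m. (z d)\<^sup>2)"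
  proof -
    have "(\<Sum>a<m::nat. \<Sum>b<m. \<Sum>c<m. \<Sum>d<m. (u a * v b * w c * z d)\<^sup>2) = (\<Sum>a<m. (u a)\<^sup>2 * (\<Sum>b<m. (v b)\<^sup>2 * (\<Sum>c<m. (w c)\<^sup>2 * (\<Sum>d<m. (z d)\<^sup>2))))"
      by (simp add: power_mult_distrib sum_distrib_left mult.assoc)
    also have "\<dots> = (\<Sum>a<m. (u a)\<^sup>2) * ((\<Sum>b<m. (v b)\<^sup>2) * ((\<Sum>c<m. (w c)\<^sup>2) * (\<Sum>d<m. (z d :: real)\<^sup>2)))"
      by (simp add: sum_distrib_right)
    finally show ?thesis by (simp add: mult.assoc)
  qed
  show ?thesis
    unfolding e1 norm2n_def frob4_def
    using cs_set[of ?f ?g ?Q] unfolding e2 e3 e4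
    by (simp add: real_sqrt_mult mult_ac)
qed

lemma upd_diff: "(\<lambda>e. (\<theta>(p := \<theta> p + e)) q) differentiable (at (e0::real))"
  by (cases "q = p") simp_all

lemma preact_diff:
  assumes "\<And>c. (\<lambda>e. hh e c) differentiable (at (e0::real))"
  shows "(\<lambda>e. preact n (\<theta>(p := \<theta> p + e)) l (hh e) r) differentiable (at e0)"
  unfolding preact_def
  by (intro differentiable_add differentiable_sum ballI differentiable_mult upd_diff assms) simp

lemma hid_diff:
  assumes "\<forall>z. \<sigma> differentiable (at z)"
  shows "(\<lambda>e. hid n \<sigma> x (\<theta>(p := \<theta> p + e)) l r) differentiable (at (e0::real))"
proof (induction l arbitrary: r)
  case 0
  then show ?case by simp
next
  case (Suc l)
  show ?case
    unfolding hid.simps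
    by (rule differentiable_compose[of \<sigma>], use assms in simp, rule preact_diff, rule Suc.IH)
qed

lemma net_diff:
  assumes "\<forall>z. \<sigma> differentiable (at z)"
  shows "(\<lambda>e. net_out n \<sigma> L x (\<theta>(p := \<theta> p + e)) a) differentiable (at (e0::real))"
  unfolding net_out_def by (rule preact_diff, rule hid_diff[OF assms])

lemma net_deriv:
  assumes "\<forall>z. \<sigma> differentiable (at z)"
  shows "((\<lambda>e. net_out n \<sigma> L x (\<theta>(p := \<theta> p + e)) a) has_real_derivative jac_col n \<sigma> L x \<theta> p a) (at 0)"
  unfolding jac_col_def pderiv_param_def
  using net_diff[OF assms] DERIV_deriv_iff_real_differentiable by blast

locale ef =
  fixes \<nu> :: "'y measure" and t :: "'y \<Rightarrow> nat \<Rightarrow> real" and m :: nat and h0 :: "nat \<Rightarrow> real"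
  assumes tmeas: "\<And>a. a < m \<Longrightarrow> (\<lambda>y. t y a) \<in> borel_measurable \<nu>"
    and inter: "in_interior_coords m (nat_param_space \<nu> t m) h0"
begin

definition "S y = (\<Sum>a<m. \<bar>t y a\<bar>)"
definition "b y = dotn m (t y) h0"

lemma dot_meas[measurable]: "(\<lambda>y. dotn m (t y) h) \<in> borel_measurable \<nu>"
  unfolding dotn_def by (intro borel_measurable_sum borel_measurable_times tmeas) auto

lemma S_meas[measurable]: "S \<in> borel_measurable \<nu>"
  unfolding S_def by (intro borel_measurable_sum borel_measurable_abs tmeas) auto

lemma b_meas[measurable]: "b \<in> borel_measurable \<nu>"
  unfolding b_def by simp

lemma S_nonneg: "0 \<le> S y"
  unfolding S_def by (simp add: sum_nonneg)

lemma t_le_S: "a < m \<Longrightarrow> \<bar>t y a\<bar> \<le> S y"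
  unfolding S_def by (rule member_le_sum) auto

lemma exp_int: "h \<in> nat_param_space \<nu> t m \<Longrightarrow> integrable \<nu> (\<lambda>y. exp (dotn m (t y) h))"
  unfolding nat_param_space_def by (intro integrableI_bounded) auto

lemma shift_dot: "dotn m (t y) (\<lambda>a'. h0 a' + (if a' = a then c else 0)) = b y + (if a < m then c * t y a else 0)"
  unfolding dotn_def b_def
  by (simp add: distrib_left sum.distrib if_distrib[where f="\<lambda>z. t y _ * z"] sum.delta' mult.commute cong: if_cong)

lemma eps_ex: "\<exists>\<epsilon>>0. \<forall>R. 0 \<le> R \<longrightarrow> real m * R < \<epsilon> \<longrightarrow> integrable \<nu> (\<lambda>y. exp (b y + R * S y))"
proof -
  obtain \<epsilon> where e0: "\<epsilon> > 0" and H: "\<And>h'. (\<forall>a<m. \<bar>h' a - h0 a\<bar> < \<epsilon>) \<Longrightarrow> h' \<in> nat_param_space \<nu> t m"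
    using inter unfolding in_interior_coords_def by blast
  have intp: "integrable \<nu> (\<lambda>y. exp (b y + c * t y a))" if "a < m" "\<bar>c\<bar> < \<epsilon>" for a c
  proof -
    have "(\<lambda>a'. h0 a' + (if a' = a then c else 0)) \<in> nat_param_space \<nu> t m"
      by (rule H) (use that e0 in auto)
    from exp_int[OF this] show ?thesis using that by (simp add: shift_dot)
  qed
  have int0: "integrable \<nu> (\<lambda>y. exp (b y))"
    using exp_int[OF H[of h0]] e0 by (simp add: b_def)
  show ?thesis
  proof (intro exI[of _ \<epsilon>] conjI allI impI e0)
    fix R :: real assume R: "0 \<le> R" "real m * R < \<epsilon>"
    let ?B = "\<lambda>y. exp (b y) + (\<Sum>a<m. exp (b y + (real m * R) * t y a) + exp (b y + (- (real m * R)) * t y a))"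
    have bnd: "exp (b y + R * S y) \<le> ?B y" for y
    proof (cases "m = 0")
      case True then show ?thesis unfolding S_def by simp
    next
      case False
      let ?M = "Max ((\<lambda>a. \<bar>t y a\<bar>) ` {..<m})"
      have "?M \<in> (\<lambda>a. \<bar>t y a\<bar>) ` {..<m}" using False by (intro Max_in) auto
      then obtain a where a: "a < m" "\<bar>t y a\<bar> = ?M" by auto
      have "S y \<le> real m * \<bar>t y a\<bar>"
        unfolding S_def using sum_bounded_above[of "{..<m}" "\<lambda>a. \<bar>t y a\<bar>" "\<bar>t y a\<bar>"] a
        by auto
      then have "R * S y \<le> (real m * R) * \<bar>t y a\<bar>" using R by (simp add: mult_left_mono mult_ac)
      then have "exp (b y + R * S y) \<le> exp (b y + (real m * R) * \<bar>t y a\<bar>)" by simp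
      also have "\<dots> \<le> exp (b y + (real m * R) * t y a) + exp (b y + (- (real m * R)) * t y a)"
        by (cases "t y a \<ge> 0") auto
      also have "\<dots> \<le> (\<Sum>a<m. exp (b y + (real m * R) * t y a) + exp (b y + (- (real m * R)) * t y a))"
        by (rule member_le_sum[where f="\<lambda>a. exp (b y + (real m * R) * t y a) + exp (b y + (- (real m * R)) * t y a)"])
           (use a in \<open>auto intro: add_nonneg_nonneg\<close>)
      also have "\<dots> \<le> ?B y" by simp
      finally show ?thesis .
    qed
    have mR: "\<bar>real m * R\<bar> < \<epsilon>" "\<bar>- (real m * R)\<bar> < \<epsilon>" using R by auto
    have "integrable \<nu> ?B"
      by (intro Bochner_Integration.integrable_add int0 Bochner_Integration.integrable_sum intp mR) auto
    then show "integrable \<nu> (\<lambda>y. exp (b y + R * S y))"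
      by (rule Bochner_Integration.integrable_bound) (use bnd in \<open>auto intro!: AE_I2 simp: abs_of_nonneg add_nonneg_nonneg sum_nonneg\<close>)
  qed
qed

end

lemma dct_at:
  fixes s :: "real \<Rightarrow> 'a \<Rightarrow> real"
  assumes meas: "\<And>e. s e \<in> borel_measurable M" and fm: "f \<in> borel_measurable M"
    and w: "integrable M w"
    and lim: "\<And>y. y \<in> space M \<Longrightarrow> ((\<lambda>e. s e y) \<longlongrightarrow> f y) (at 0)"
    and bnd: "eventually (\<lambda>e. \<forall>y\<in>space M. \<bar>s e y\<bar> \<le> w y) (at 0)"
  shows "((\<lambda>e. integral\<^sup>L M (s e)) \<longlongrightarrow> integral\<^sup>L M f) (at 0)"
  unfolding tendsto_at_iff_sequentially
proof (intro allI impI)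
  fix X :: "nat \<Rightarrow> real" assume X0: "\<forall>i. X i \<in> UNIV - {0}" and X: "X \<longlonglongrightarrow> 0"
  have "filterlim X (at 0) sequentially"
    using X X0 by (intro filterlim_atI) auto
  from filterlim_iff[THEN iffD1, OF this, rule_format, OF bnd]
  obtain N where wN: "\<And>n. N \<le> n \<Longrightarrow> \<forall>y\<in>space M. \<bar>s (X n) y\<bar> \<le> w y"
    by (auto simp: eventually_sequentially)
  have "(\<lambda>n. integral\<^sup>L M (s (X (n + N)))) \<longlonglongrightarrow> integral\<^sup>L M f"
  proof (rule integral_dominated_convergence[where w=w])
    show "AE x in M. norm (s (X (n + N)) x) \<le> w x" for n
      using wN[of "n+N"] by (intro AE_I2) auto
    show "AE x in M. (\<lambda>n. s (X (n + N)) x) \<longlonglongrightarrow> f x"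
    proof (intro AE_I2)
      fix y assume y: "y \<in> space M"
      have "filterlim X (at 0) sequentially"
        using X X0 by (intro filterlim_atI) auto
      then have "(\<lambda>n. s (X n) y) \<longlonglongrightarrow> f y"
        by (rule filterlim_compose[OF lim[OF y]])
      then show "(\<lambda>n. s (X (n + N)) y) \<longlonglongrightarrow> f y"
        by (rule LIMSEQ_ignore_initial_segment)
    qed
  qed (use meas fm w in auto)
  then show "((\<lambda>e. integral\<^sup>L M (s e)) \<circ> X) \<longlonglongrightarrow> integral\<^sup>L M f"
    unfolding comp_def by (rule LIMSEQ_offset)
qed

lemma exp_minus_one_bound: "\<bar>exp x - 1\<bar> \<le> \<bar>x\<bar> * exp \<bar>x\<bar>" for x :: real
proof (cases "x \<ge> 0")
  case True
  have "1 - x \<le> exp (-x)" using exp_ge_add_one_self[of "-x"] by simp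
  then have "(1 - x) * exp x \<le> exp (-x) * exp x" by (simp add: mult_right_mono)
  then have "exp x - x * exp x \<le> 1" by (simp add: algebra_simps exp_minus_inverse)
  then show ?thesis using True by (simp add: abs_of_nonneg)
next
  case False
  have "1 + x \<le> exp x" by (rule exp_ge_add_one_self)
  moreover have "exp x \<le> 1" using False by simp
  moreover have "1 \<le> exp \<bar>x\<bar>" by simp
  ultimately have "\<bar>exp x - 1\<bar> \<le> \<bar>x\<bar>"
  proof -
    assume a1: "1 + x \<le> exp x" and a2: "exp x \<le> 1"
    have "\<bar>exp x - 1\<bar> = 1 - exp x" using a2 by simp
    then show ?thesis using a1 False by linarith
  qed
  also have "\<dots> \<le> \<bar>x\<bar> * exp \<bar>x\<bar>" using \<open>1 \<le> exp \<bar>x\<bar>\<close> by (simp add: mult_le_cancel_left1)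
  finally show ?thesis .
qed

lemma pow_le_exp: fixes z :: real assumes z: "0 \<le> z" shows "z ^ k \<le> real k ^ k * exp z"
proof (cases "k = 0")
  case True then show ?thesis using z by simp
next
  case False
  have "z / k \<le> exp (z / k)" using exp_ge_add_one_self[of "z/k"] by linarith
  then have "(z / k) ^ k \<le> exp (z / k) ^ k" using z by (intro power_mono) auto
  also have "\<dots> = exp z" using False by (simp add: exp_of_nat_mult[symmetric])
  finally have "(z / k) ^ k \<le> exp z" .
  then have "real k ^ k * (z / k) ^ k \<le> real k ^ k * exp z" by (simp add: mult_left_mono)
  then show ?thesis using False by (simp add: power_divide)
qed

context ef begin

definition "rr = (SOME r. 0 < r \<and> (\<forall>R. 0 \<le> R \<and> R \<le> 2*r \<longrightarrow> integrable \<nu> (\<lambda>y. exp (b y + R * S y))))"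

lemma rr_ex: "\<exists>r. 0 < r \<and> (\<forall>R. 0 \<le> R \<and> R \<le> 2*r \<longrightarrow> integrable \<nu> (\<lambda>y. exp (b y + R * S y)))"
proof -
  obtain \<epsilon> where e: "\<epsilon> > 0" "\<And>R. 0 \<le> R \<Longrightarrow> real m * R < \<epsilon> \<Longrightarrow> integrable \<nu> (\<lambda>y. exp (b y + R * S y))"
    using eps_ex by blast
  let ?r = "\<epsilon> / (2 * (real m + 1))"
  show ?thesis
  proof (intro exI[of _ ?r] conjI allI impI)
    show "0 < ?r" using e by simp
    fix R assume R: "0 \<le> R \<and> R \<le> 2 * ?r"
    have "real m * R \<le> real m * (2 * ?r)" by (intro mult_left_mono) (use R in auto)
    also have "\<dots> = \<epsilon> * (real m / (real m + 1))" by (simp add: field_simps)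
    also have "\<dots> < \<epsilon>"
    proof -
      have "real m / (real m + 1) < 1" by simp
      from mult_strict_left_mono[OF this e(1)] show ?thesis by simp
    qed
    finally show "integrable \<nu> (\<lambda>y. exp (b y + R * S y))" using e R by blast
  qed
qed

lemma rr_pos: "0 < rr" and rr_int: "0 \<le> R \<Longrightarrow> R \<le> 2*rr \<Longrightarrow> integrable \<nu> (\<lambda>y. exp (b y + R * S y))"
  using someI_ex[OF rr_ex] unfolding rr_def[symmetric] by auto

lemma Z_deriv:
  assumes H0: "\<And>a. a < m \<Longrightarrow> H 0 a = h0 a"
    and HD: "\<And>a. a < m \<Longrightarrow> ((\<lambda>e. H e a) has_real_derivative J a) (at 0)"
  shows "((\<lambda>e. \<integral>y. exp (dotn m (t y) (H e)) \<partial>\<nu>) has_real_derivative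
           (\<integral>y. exp (b y) * (\<Sum>a<m. t y a * J a) \<partial>\<nu>)) (at 0)"
proof -
  define C where "C = 1 + (\<Sum>a<m. \<bar>J a\<bar>)"
  have C1: "C \<ge> 1" unfolding C_def by (simp add: sum_nonneg)
  have Ja: "\<bar>J a\<bar> + 1 \<le> C" if "a < m" for a
    unfolding C_def using member_le_sum[of a "{..<m}" "\<lambda>a. \<bar>J a\<bar>"] that by auto
  have b0: "dotn m (t y) (H 0) = b y" for y
    unfolding dotn_def b_def by (intro sum.cong) (auto simp: H0)
  have ev1: "eventually (\<lambda>e. \<forall>a\<in>{..<m}. \<bar>H e a - h0 a\<bar> \<le> C * \<bar>e\<bar>) (at 0)"
  proof (rule eventually_ball_finite, simp, intro ballI)
    fix a assume a: "a \<in> {..<m}"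
    have "((\<lambda>e. (H (0 + e) a - H 0 a) / e) \<longlongrightarrow> J a) (at 0)"
      using HD[of a] a unfolding DERIV_def by auto
    then have "eventually (\<lambda>e. dist ((H e a - h0 a) / e) (J a) < 1) (at 0)"
      using a H0 by (auto dest: tendstoD[where e=1])
    moreover have "eventually (\<lambda>e::real. e \<noteq> 0) (at 0)" by (simp add: eventually_at_filter)
    ultimately show "eventually (\<lambda>e. \<bar>H e a - h0 a\<bar> \<le> C * \<bar>e\<bar>) (at 0)"
    proof eventually_elim
      case (elim e)
      have "\<bar>(H e a - h0 a) / e\<bar> \<le> \<bar>J a\<bar> + 1" using elim(1) by (auto simp: dist_real_def)
      then have "\<bar>H e a - h0 a\<bar> / \<bar>e\<bar> \<le> C" using Ja[of a] a by (simp add: abs_divide)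
      then show ?case using elim(2) by (simp add: divide_le_eq mult.commute)
    qed
  qed
  have ev2: "eventually (\<lambda>e::real. \<bar>e\<bar> < rr / C) (at 0)"
    using rr_pos C1 by (auto simp: eventually_at intro!: exI[of _ "rr / C"])
  have Dbd: "\<bar>dotn m (t y) (H e) - b y\<bar> \<le> S y * (C * \<bar>e\<bar>) \<and> \<bar>dotn m (t y) (H e) - b y\<bar> \<le> rr * S y"
    if e1: "\<forall>a\<in>{..<m}. \<bar>H e a - h0 a\<bar> \<le> C * \<bar>e\<bar>" and e2: "\<bar>e\<bar> < rr / C" for e y
  proof -
    define D where "D = dotn m (t y) (H e) - b y"
    have D: "D = (\<Sum>a<m. t y a * (H e a - h0 a))"
      unfolding D_def dotn_def b_def by (simp add: sum_subtractf algebra_simps)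
    have "\<bar>D\<bar> \<le> (\<Sum>a<m. \<bar>t y a\<bar> * (C * \<bar>e\<bar>))"
      unfolding D by (rule order_trans[OF sum_abs]) (use e1 in \<open>auto intro!: sum_mono mult_left_mono simp: abs_mult\<close>)
    also have "\<dots> = S y * (C * \<bar>e\<bar>)" unfolding S_def by (simp add: sum_distrib_right)
    finally have Dle: "\<bar>D\<bar> \<le> S y * (C * \<bar>e\<bar>)" .
    have "C * \<bar>e\<bar> \<le> rr" using e2 C1 by (simp add: field_simps)
    then have "S y * (C * \<bar>e\<bar>) \<le> S y * rr" using S_nonneg[of y] by (rule mult_left_mono)
    then have "S y * (C * \<bar>e\<bar>) \<le> rr * S y" by (simp add: mult.commute)
    with Dle show ?thesis unfolding D_def by linarith
  qed
  have est: "\<bar>exp (dotn m (t y) (H e)) - exp (b y)\<bar> \<le> exp (b y) * (S y * (C * \<bar>e\<bar>)) * exp (rr * S y)"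
    if e1: "\<forall>a\<in>{..<m}. \<bar>H e a - h0 a\<bar> \<le> C * \<bar>e\<bar>" and e2: "\<bar>e\<bar> < rr / C" for e y
  proof -
    define D where "D = dotn m (t y) (H e) - b y"
    have D: "D = (\<Sum>a<m. t y a * (H e a - h0 a))"
      unfolding D_def dotn_def b_def by (simp add: sum_subtractf algebra_simps)
    have "\<bar>D\<bar> \<le> (\<Sum>a<m. \<bar>t y a\<bar> * (C * \<bar>e\<bar>))"
      unfolding D by (rule order_trans[OF sum_abs]) (use e1 in \<open>auto intro!: sum_mono mult_left_mono simp: abs_mult\<close>)
    also have "\<dots> = S y * (C * \<bar>e\<bar>)" unfolding S_def by (simp add: sum_distrib_right)
    finally have Dle: "\<bar>D\<bar> \<le> S y * (C * \<bar>e\<bar>)" .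
    have "C * \<bar>e\<bar> \<le> rr" using e2 C1 by (simp add: field_simps)
    then have "S y * (C * \<bar>e\<bar>) \<le> S y * rr" using S_nonneg[of y] by (rule mult_left_mono)
    then have "S y * (C * \<bar>e\<bar>) \<le> rr * S y" by (simp add: mult.commute)
    with Dle have Dle2: "\<bar>D\<bar> \<le> rr * S y" by linarith
    have ed: "exp (dotn m (t y) (H e)) = exp (b y) * exp D" by (simp add: D_def exp_diff)
    have "\<bar>exp (dotn m (t y) (H e)) - exp (b y)\<bar> = exp (b y) * \<bar>exp D - 1\<bar>"
    proof -
      have "exp (b y) * exp D - exp (b y) = exp (b y) * (exp D - 1)" by (simp add: algebra_simps)
      then show ?thesis unfolding ed by (simp add: abs_mult)
    qed
    also have "\<dots> \<le> exp (b y) * (\<bar>D\<bar> * exp \<bar>D\<bar>)"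
      by (intro mult_left_mono exp_minus_one_bound) simp
    also have "\<dots> \<le> exp (b y) * (S y * (C * \<bar>e\<bar>) * exp (rr * S y))"
      using Dle Dle2 by (intro mult_left_mono mult_mono) auto
    finally show ?thesis by (simp add: mult.assoc)
  qed
  define W where "W y = (C / rr) * exp (b y + 2 * rr * S y)" for y
  have Wint: "integrable \<nu> W"
    unfolding W_def using rr_int[of "2*rr"] rr_pos by (intro integrable_mult_right) (simp add: mult.assoc)
  have S_le: "S y \<le> exp (rr * S y) / rr" for y
  proof -
    have "rr * S y \<le> exp (rr * S y)" using exp_ge_add_one_self[of "rr * S y"] by linarith
    then show ?thesis using rr_pos by (simp add: field_simps)
  qed
  define s where "s e y = (exp (dotn m (t y) (H e)) - exp (b y)) / e" for e y
  have sb: "\<bar>s e y\<bar> \<le> W y"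
    if e1: "\<forall>a\<in>{..<m}. \<bar>H e a - h0 a\<bar> \<le> C * \<bar>e\<bar>" and e2: "\<bar>e\<bar> < rr / C" and e0: "e \<noteq> 0" for e y
  proof -
    have "\<bar>s e y\<bar> \<le> exp (b y) * (S y * C) * exp (rr * S y)"
      using est[OF e1 e2, of y] e0 unfolding s_def by (simp add: abs_divide divide_le_eq mult_ac)
    also have "\<dots> \<le> exp (b y) * ((exp (rr * S y) / rr) * C) * exp (rr * S y)"
      using C1 S_le[of y] by (intro mult_right_mono mult_left_mono) auto
    also have "\<dots> = W y" unfolding W_def by (simp add: exp_add[symmetric] field_simps)
    finally show ?thesis .
  qed
  have eint: "integrable \<nu> (\<lambda>y. exp (dotn m (t y) (H e)))"
    if e1: "\<forall>a\<in>{..<m}. \<bar>H e a - h0 a\<bar> \<le> C * \<bar>e\<bar>" and e2: "\<bar>e\<bar> < rr / C" for e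
  proof (rule Bochner_Integration.integrable_bound[OF rr_int[of rr]])
    show "AE y in \<nu>. norm (exp (dotn m (t y) (H e))) \<le> norm (exp (b y + rr * S y))"
    proof (intro AE_I2)
      fix y
      have "dotn m (t y) (H e) \<le> b y + rr * S y" using Dbd[OF e1 e2, of y] by linarith
      then show "norm (exp (dotn m (t y) (H e))) \<le> norm (exp (b y + rr * S y))" by simp
    qed
  qed (use rr_pos in auto)
  have lim: "((\<lambda>e. \<integral>y. s e y \<partial>\<nu>) \<longlongrightarrow> (\<integral>y. exp (b y) * (\<Sum>a<m. t y a * J a) \<partial>\<nu>)) (at 0)"
  proof (rule dct_at[where w=W])
    show "s e \<in> borel_measurable \<nu>" for e unfolding s_def by simp
    show "(\<lambda>y. exp (b y) * (\<Sum>a<m. t y a * J a)) \<in> borel_measurable \<nu>"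
      unfolding dotn_def[symmetric] by simp
    show "integrable \<nu> W" by (rule Wint)
    show "((\<lambda>e. s e y) \<longlongrightarrow> exp (b y) * (\<Sum>a<m. t y a * J a)) (at 0)" for y
    proof -
      have "((\<lambda>e. \<Sum>a<m. t y a * H e a) has_real_derivative (\<Sum>a<m. t y a * J a)) (at 0)"
        by (intro DERIV_sum DERIV_cmult HD) auto
      then have "((\<lambda>e. exp (dotn m (t y) (H e))) has_real_derivative exp (dotn m (t y) (H 0)) * (\<Sum>a<m. t y a * J a)) (at 0)"
        unfolding dotn_def by (rule DERIV_fun_exp)
      then show ?thesis unfolding DERIV_def s_def b0 by simp
    qed
    show "eventually (\<lambda>e. \<forall>y\<in>space \<nu>. \<bar>s e y\<bar> \<le> W y) (at 0)"
    proof -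
      have ev0: "eventually (\<lambda>e::real. e \<noteq> 0) (at 0)" by (simp add: eventually_at_filter)
      show ?thesis using ev1 ev2 ev0 by eventually_elim (use sb in auto)
    qed
  qed
  have "((\<lambda>e. ((\<integral>y. exp (dotn m (t y) (H (0 + e))) \<partial>\<nu>) - (\<integral>y. exp (dotn m (t y) (H 0)) \<partial>\<nu>)) / e)
      \<longlongrightarrow> (\<integral>y. exp (b y) * (\<Sum>a<m. t y a * J a) \<partial>\<nu>)) (at 0)"
  proof (rule Lim_transform_eventually[OF lim])
    show "eventually (\<lambda>e. (\<integral>y. s e y \<partial>\<nu>) = ((\<integral>y. exp (dotn m (t y) (H (0 + e))) \<partial>\<nu>) - (\<integral>y. exp (dotn m (t y) (H 0)) \<partial>\<nu>)) / e) (at 0)"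
      using ev1 ev2
    proof eventually_elim
      case (elim e)
      have "(\<integral>y. s e y \<partial>\<nu>) = (\<integral>y. exp (dotn m (t y) (H e)) - exp (b y) \<partial>\<nu>) / e"
        unfolding s_def by simp
      also have "\<dots> = ((\<integral>y. exp (dotn m (t y) (H e)) \<partial>\<nu>) - (\<integral>y. exp (b y) \<partial>\<nu>)) / e"
        using eint[OF elim] rr_int[of 0] rr_pos by (subst Bochner_Integration.integral_diff) auto
      finally show ?case by (simp add: b0)
    qed
  qed
  then show ?thesis unfolding DERIV_def .
qed

end

locale ef_pos = ef +
  assumes nz: "emeasure \<nu> (space \<nu>) \<noteq> 0"
begin

definition "Z0 = (\<integral>y. exp (b y) \<partial>\<nu>)"

lemma int_b: "integrable \<nu> (\<lambda>y. exp (b y))"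
  using rr_int[of 0] rr_pos by simp

lemma Z0_pos: "0 < Z0"
proof -
  have ge: "0 \<le> Z0" unfolding Z0_def by (rule integral_nonneg_AE) simp
  have "Z0 \<noteq> 0"
  proof
    assume "Z0 = 0"
    then have "AE y in \<nu>. exp (b y) = 0"
      unfolding Z0_def using integral_nonneg_eq_0_iff_AE[OF int_b] by simp
    then have "AE y in \<nu>. False" by simp
    then have "emeasure \<nu> (space \<nu>) = 0" by (subst (asm) AE_iff_measurable[of "space \<nu>"]) auto
    with nz show False by simp
  qed
  with ge show ?thesis by simp
qed

lemma lp0: "log_partition \<nu> t m h0 = ln Z0"
  unfolding log_partition_def Z0_def b_def ..

lemma dens0: "expfam_density \<nu> t m h0 y = exp (b y) / Z0"
  unfolding expfam_density_def lp0 b_def[symmetric] using Z0_pos by (simp add: exp_diff)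

definition "P = expfam_measure \<nu> t m h0"

lemma P_eq: "P = density \<nu> (\<lambda>y. ennreal (exp (b y) / Z0))"
  unfolding P_def expfam_measure_def dens0 ..

lemma space_P[simp]: "space P = space \<nu>" and sets_P[simp]: "sets P = sets \<nu>"
  unfolding P_eq by auto

lemma meas_P_iff[simp]: "f \<in> borel_measurable P \<longleftrightarrow> f \<in> borel_measurable \<nu>"
  by (simp add: measurable_def)

lemma prob_P: "prob_space P"
proof
  have "emeasure P (space P) = (\<integral>\<^sup>+ y. ennreal (exp (b y) / Z0) * indicator (space \<nu>) y \<partial>\<nu>)"
    unfolding P_eq space_density by (rule emeasure_density) auto
  also have "\<dots> = (\<integral>\<^sup>+ y. ennreal (exp (b y) / Z0) \<partial>\<nu>)"
    by (rule nn_integral_cong) simp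
  also have "\<dots> = ennreal (\<integral>y. exp (b y) / Z0 \<partial>\<nu>)"
    using int_b Z0_pos by (intro nn_integral_eq_integral) auto
  also have "(\<integral>y. exp (b y) / Z0 \<partial>\<nu>) = 1"
    using Z0_pos unfolding Z0_def by simp
  finally show "emeasure P (space P) = 1" by simp
qed

lemma intP_eq: "f \<in> borel_measurable \<nu> \<Longrightarrow> integral\<^sup>L P f = (\<integral>y. exp (b y) / Z0 * f y \<partial>\<nu>)"
  unfolding P_eq using Z0_pos by (subst integral_density) auto

lemma integrable_P_iff: "f \<in> borel_measurable \<nu> \<Longrightarrow> integrable P f \<longleftrightarrow> integrable \<nu> (\<lambda>y. exp (b y) / Z0 * f y)"
  unfolding P_eq using Z0_pos by (subst integrable_density) auto

lemma intP:
  assumes fm: "f \<in> borel_measurable \<nu>" and R: "0 \<le> R" "R \<le> 2 * rr"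
    and bd: "\<And>y. y \<in> space \<nu> \<Longrightarrow> \<bar>f y\<bar> \<le> c * exp (R * S y)"
  shows "integrable P f"
  unfolding integrable_P_iff[OF fm]
proof (rule Bochner_Integration.integrable_bound)
  show "integrable \<nu> (\<lambda>y. (\<bar>c\<bar> / Z0) * exp (b y + R * S y))"
    using rr_int[OF R] by simp
  show "(\<lambda>y. exp (b y) / Z0 * f y) \<in> borel_measurable \<nu>" using fm by simp
  show "AE y in \<nu>. norm (exp (b y) / Z0 * f y) \<le> norm (\<bar>c\<bar> / Z0 * exp (b y + R * S y))"
  proof (intro AE_I2)
    fix y assume y: "y \<in> space \<nu>"
    have "\<bar>f y\<bar> \<le> \<bar>c\<bar> * exp (R * S y)" by (rule order_trans[OF bd[OF y]], rule mult_right_mono) auto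
    then have "exp (b y) / Z0 * \<bar>f y\<bar> \<le> exp (b y) / Z0 * (\<bar>c\<bar> * exp (R * S y))"
      using Z0_pos by (intro mult_left_mono) auto
    then show "norm (exp (b y) / Z0 * f y) \<le> norm (\<bar>c\<bar> / Z0 * exp (b y + R * S y))"
      using Z0_pos by (simp add: abs_mult exp_add mult_ac)
  qed
qed

definition "eta a = suff_mean \<nu> t m h0 a"
definition "EE = (\<Sum>a<m. \<bar>eta a\<bar>)"

lemma eta_eq: "a < m \<Longrightarrow> eta a = (\<integral>y. t y a \<partial>P)"
  unfolding eta_def suff_mean_def P_def ..

lemma cent_bd: "a < m \<Longrightarrow> \<bar>t y a - eta a\<bar> \<le> S y + EE"
proof -
  assume a: "a < m"
  have "\<bar>eta a\<bar> \<le> EE" unfolding EE_def using a by (intro member_le_sum[of a "{..<m}" "\<lambda>a. \<bar>eta a\<bar>"]) auto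
  then show ?thesis using t_le_S[OF a, of y] by linarith
qed

lemma EE_nonneg: "0 \<le> EE" unfolding EE_def by (simp add: sum_nonneg)

lemma polyP:
  assumes fm: "f \<in> borel_measurable \<nu>"
    and bd: "\<And>y. y \<in> space \<nu> \<Longrightarrow> \<bar>f y\<bar> \<le> c * (S y + EE) ^ k"
  shows "integrable P f"
proof (rule intP[OF fm, of rr "\<bar>c\<bar> * real k ^ k * exp (rr * EE) / rr ^ k"])
  show "0 \<le> rr" "rr \<le> 2 * rr" using rr_pos by auto
  fix y assume y: "y \<in> space \<nu>"
  have z: "0 \<le> rr * (S y + EE)" using rr_pos S_nonneg EE_nonneg by simp
  have "(rr * (S y + EE)) ^ k \<le> real k ^ k * exp (rr * (S y + EE))" by (rule pow_le_exp[OF z])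
  then have "rr ^ k * (S y + EE) ^ k \<le> real k ^ k * exp (rr * (S y + EE))"
    unfolding power_mult_distrib .
  then have pk: "(S y + EE) ^ k \<le> real k ^ k * exp (rr * (S y + EE)) / rr ^ k"
    using rr_pos by (simp add: pos_le_divide_eq mult.commute)
  have "\<bar>f y\<bar> \<le> \<bar>c\<bar> * (S y + EE) ^ k"
    by (rule order_trans[OF bd[OF y]], rule mult_right_mono) (auto intro!: zero_le_power add_nonneg_nonneg S_nonneg EE_nonneg)
  also have "\<dots> \<le> \<bar>c\<bar> * (real k ^ k * exp (rr * (S y + EE)) / rr ^ k)"
    by (intro mult_left_mono pk) auto
  also have "\<dots> = \<bar>c\<bar> * real k ^ k * exp (rr * EE) / rr ^ k * exp (rr * S y)"
    by (simp add: distrib_left exp_add field_simps)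
  finally show "\<bar>f y\<bar> \<le> \<bar>c\<bar> * real k ^ k * exp (rr * EE) / rr ^ k * exp (rr * S y)" .
qed

end

lemma pim_pair:
  fixes P :: "'y measure" and f g :: "'y \<Rightarrow> real"
  assumes pP: "prob_space P" and I: "finite I" "s \<in> I" "s' \<in> I" "s \<noteq> s'"
    and f: "integrable P f" and g: "integrable P g"
  shows "(\<integral>ys. f (ys s) * g (ys s') \<partial>PiM I (\<lambda>_. P)) = integral\<^sup>L P f * integral\<^sup>L P g"
    and "integrable (PiM I (\<lambda>_. P)) (\<lambda>ys. f (ys s) * g (ys s'))"
proof -
  interpret prob_space P by (rule pP)
  interpret product_sigma_finite "\<lambda>_. P" by standard
  define F where "F i y = (if i = s then f y else if i = s' then g y else 1)" for i y
  have intF: "integrable P (F i)" for i unfolding F_def using f g by (cases "i = s"; cases "i = s'") auto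
  have pr: "(\<Prod>i\<in>I. F i (ys i)) = f (ys s) * g (ys s')" for ys
  proof -
    have "(\<Prod>i\<in>I. F i (ys i)) = (\<Prod>i\<in>I. (if i = s then f (ys i) else 1) * (if i = s' then g (ys i) else 1))"
      unfolding F_def using I by (intro prod.cong) auto
    also have "\<dots> = f (ys s) * g (ys s')" using I by (simp add: prod.distrib)
    finally show ?thesis .
  qed
  have "(\<integral>ys. (\<Prod>i\<in>I. F i (ys i)) \<partial>PiM I (\<lambda>_. P)) = (\<Prod>i\<in>I. integral\<^sup>L P (F i))"
    by (rule product_integral_prod) (use I intF in auto)
  also have "(\<Prod>i\<in>I. integral\<^sup>L P (F i)) = (\<Prod>i\<in>I. (if i = s then integral\<^sup>L P f else 1) * (if i = s' then integral\<^sup>L P g else 1))"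
    unfolding F_def using I by (intro prod.cong) (auto simp: prob_space)
  also have "\<dots> = integral\<^sup>L P f * integral\<^sup>L P g" using I by (simp add: prod.distrib)
  finally show "(\<integral>ys. f (ys s) * g (ys s') \<partial>PiM I (\<lambda>_. P)) = integral\<^sup>L P f * integral\<^sup>L P g"
    unfolding pr .
  have "integrable (PiM I (\<lambda>_. P)) (\<lambda>ys. \<Prod>i\<in>I. F i (ys i))"
    by (rule product_integrable_prod) (use I intF in auto)
  then show "integrable (PiM I (\<lambda>_. P)) (\<lambda>ys. f (ys s) * g (ys s'))" unfolding pr .
qed

lemma pim_single:
  fixes P :: "'y measure" and f :: "'y \<Rightarrow> real"
  assumes pP: "prob_space P" and I: "finite I" "s \<in> I" and f: "integrable P f"
  shows "(\<integral>ys. f (ys s) \<partial>PiM I (\<lambda>_. P)) = integral\<^sup>L P f"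
    and "integrable (PiM I (\<lambda>_. P)) (\<lambda>ys. f (ys s))"
proof -
  interpret prob_space P by (rule pP)
  interpret product_sigma_finite "\<lambda>_. P" by standard
  define F where "F i y = (if i = s then f y else 1)" for i y
  have intF: "integrable P (F i)" for i unfolding F_def using f by (cases "i = s") auto
  have pr: "(\<Prod>i\<in>I. F i (ys i)) = f (ys s)" for ys
    unfolding F_def using I by simp
  have "(\<integral>ys. (\<Prod>i\<in>I. F i (ys i)) \<partial>PiM I (\<lambda>_. P)) = (\<Prod>i\<in>I. integral\<^sup>L P (F i))"
    by (rule product_integral_prod) (use I intF in auto)
  also have "(\<Prod>i\<in>I. integral\<^sup>L P (F i)) = (\<Prod>i\<in>I. (if i = s then integral\<^sup>L P f else 1))"
    unfolding F_def using I by (intro prod.cong) (auto simp: prob_space)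
  also have "\<dots> = integral\<^sup>L P f" using I by simp
  finally show "(\<integral>ys. f (ys s) \<partial>PiM I (\<lambda>_. P)) = integral\<^sup>L P f" unfolding pr .
  have "integrable (PiM I (\<lambda>_. P)) (\<lambda>ys. \<Prod>i\<in>I. F i (ys i))"
    by (rule product_integrable_prod) (use I intF in auto)
  then show "integrable (PiM I (\<lambda>_. P)) (\<lambda>ys. f (ys s))" unfolding pr .
qed

lemma cov_iid:
  fixes P :: "'y measure" and A B :: "'y \<Rightarrow> real"
  assumes pP: "prob_space P" and N: "N \<ge> 1"
    and iA: "integrable P A" and iB: "integrable P B" and iAB: "integrable P (\<lambda>y. A y * B y)"
  shows "covar (PiM {..<N} (\<lambda>_. P)) (\<lambda>ys. (1 / real N) * (\<Sum>s<N. A (ys s))) (\<lambda>ys. (1 / real N) * (\<Sum>s<N. B (ys s)))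
       = (1 / real N) * ((\<integral>y. A y * B y \<partial>P) - integral\<^sup>L P A * integral\<^sup>L P B)"
proof -
  interpret prob_space P by (rule pP)
  let ?Q = "PiM {..<N} (\<lambda>_. P)"
  define EA where "EA = integral\<^sup>L P A"
  define EB where "EB = integral\<^sup>L P B"
  have NN: "real N > 0" using N by simp
  have mean: "(\<integral>ys. (1 / real N) * (\<Sum>s<N. F (ys s)) \<partial>?Q) = integral\<^sup>L P F" if iF: "integrable P F" for F
  proof -
    have iFs: "integrable ?Q (\<lambda>ys. F (ys s))" if "s \<in> {..<N}" for s
      using pim_single(2)[OF pP _ _ iF, of "{..<N}" s] that by simp
    have "(\<integral>ys. (1 / real N) * (\<Sum>s<N. F (ys s)) \<partial>?Q) = (1 / real N) * (\<integral>ys. (\<Sum>s<N. F (ys s)) \<partial>?Q)"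
      by simp
    also have "(\<integral>ys. (\<Sum>s<N. F (ys s)) \<partial>?Q) = (\<Sum>s<N. \<integral>ys. F (ys s) \<partial>?Q)"
      by (rule Bochner_Integration.integral_sum) (rule iFs)
    also have "(\<Sum>s<N. \<integral>ys. F (ys s) \<partial>?Q) = (\<Sum>s<N. integral\<^sup>L P F)"
    proof (rule sum.cong)
      fix s assume "s \<in> {..<N}"
      then show "(\<integral>ys. F (ys s) \<partial>?Q) = integral\<^sup>L P F"
        using pim_single(1)[OF pP _ _ iF, of "{..<N}" s] by simp
    qed simp
    finally show ?thesis using NN by simp
  qed
  have cA: "(\<lambda>ys. (1 / real N) * (\<Sum>s<N. A (ys s))) ys - EA = (1 / real N) * (\<Sum>s<N. A (ys s) - EA)" for ys
    using NN by (simp add: sum_subtractf field_simps)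
  have cB: "(\<lambda>ys. (1 / real N) * (\<Sum>s<N. B (ys s))) ys - EB = (1 / real N) * (\<Sum>s<N. B (ys s) - EB)" for ys
    using NN by (simp add: sum_subtractf field_simps)
  define C where "C s s' ys = (A (ys s) - EA) * (B (ys s') - EB)" for s s' and ys :: "nat \<Rightarrow> 'y"
  have iA': "integrable P (\<lambda>y. A y - EA)" using iA by auto
  have iB': "integrable P (\<lambda>y. B y - EB)" using iB by auto
  have iC1: "integrable P (\<lambda>y. (A y - EA) * (B y - EB))"
  proof -
    have "integrable P (\<lambda>y. A y * B y - EB * A y - EA * B y + EA * EB)"
      using iA iB iAB by auto
    then show ?thesis by (simp add: algebra_simps)
  qed
  have EC1: "(\<integral>y. (A y - EA) * (B y - EB) \<partial>P) = (\<integral>y. A y * B y \<partial>P) - EA * EB"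
  proof -
    have "(\<integral>y. (A y - EA) * (B y - EB) \<partial>P) = (\<integral>y. A y * B y - EB * A y - EA * B y + EA * EB \<partial>P)"
      by (simp add: algebra_simps)
    also have "\<dots> = (\<integral>y. A y * B y \<partial>P) - EB * EA - EA * EB + EA * EB"
      using iA iB iAB unfolding EA_def EB_def by (simp add: prob_space)
    finally show ?thesis by simp
  qed
  have EA0: "(\<integral>y. A y - EA \<partial>P) = 0" using iA unfolding EA_def by (simp add: prob_space)
  have intC: "integrable ?Q (C s s')" and EC: "(\<integral>ys. C s s' ys \<partial>?Q) = (if s = s' then (\<integral>y. A y * B y \<partial>P) - EA * EB else 0)"
    if "s < N" "s' < N" for s s'
  proof -
    have "integrable ?Q (C s s') \<and> (\<integral>ys. C s s' ys \<partial>?Q) = (if s = s' then (\<integral>y. A y * B y \<partial>P) - EA * EB else 0)"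
    proof (cases "s = s'")
      case True
      then show ?thesis unfolding C_def
        using pim_single[OF pP _ _ iC1, of "{..<N}" s] that EC1 by simp
    next
      case False
      then show ?thesis unfolding C_def
        using pim_pair[OF pP _ _ _ False iA' iB', of "{..<N}"] that EA0 by simp
    qed
    then show "integrable ?Q (C s s')" "(\<integral>ys. C s s' ys \<partial>?Q) = (if s = s' then (\<integral>y. A y * B y \<partial>P) - EA * EB else 0)"
      by auto
  qed
  have "covar ?Q (\<lambda>ys. (1 / real N) * (\<Sum>s<N. A (ys s))) (\<lambda>ys. (1 / real N) * (\<Sum>s<N. B (ys s)))
      = (\<integral>ys. (1 / real N) * (1 / real N) * (\<Sum>s<N. \<Sum>s'<N. C s s' ys) \<partial>?Q)"
    unfolding covar_def mean[OF iA] mean[OF iB] EA_def[symmetric] EB_def[symmetric] cA cB C_def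
    by (simp add: sum_product mult_ac)
  also have "\<dots> = (1 / real N) * (1 / real N) * (\<Sum>s<N. \<Sum>s'<N. \<integral>ys. C s s' ys \<partial>?Q)"
  proof -
    have "(\<integral>ys. (\<Sum>s<N. \<Sum>s'<N. C s s' ys) \<partial>?Q) = (\<Sum>s<N. \<integral>ys. (\<Sum>s'<N. C s s' ys) \<partial>?Q)"
      by (rule Bochner_Integration.integral_sum) (auto intro!: Bochner_Integration.integrable_sum intC)
    also have "\<dots> = (\<Sum>s<N. \<Sum>s'<N. \<integral>ys. C s s' ys \<partial>?Q)"
      by (intro sum.cong refl Bochner_Integration.integral_sum) (auto intro: intC)
    finally show ?thesis by simp
  qed
  also have "\<dots> = (1 / real N) * (1 / real N) * (\<Sum>s<N. (\<integral>y. A y * B y \<partial>P) - EA * EB)"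
  proof -
    have "(\<Sum>s<N. \<Sum>s'<N. \<integral>ys. C s s' ys \<partial>?Q) = (\<Sum>s<N. \<Sum>s'<N. if s = s' then (\<integral>y. A y * B y \<partial>P) - EA * EB else 0)"
      by (intro sum.cong refl) (simp add: EC)
    then show ?thesis by simp
  qed
  also have "\<dots> = (1 / real N) * ((\<integral>y. A y * B y \<partial>P) - EA * EB)"
    using NN by simp
  finally show ?thesis unfolding EA_def EB_def .
qed

context ef_pos begin

definition "cc y a = t y a - eta a"

lemma cc_meas[measurable]: "a < m \<Longrightarrow> (\<lambda>y. cc y a) \<in> borel_measurable \<nu>"
  unfolding cc_def using tmeas by simp

lemma cc_bd: "a < m \<Longrightarrow> \<bar>cc y a\<bar> \<le> S y + EE"
  unfolding cc_def by (rule cent_bd)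

lemma SE_nonneg: "0 \<le> S y + EE" using S_nonneg EE_nonneg by simp

lemma mom2: assumes "a < m" "a' < m" shows "integrable P (\<lambda>y. cc y a * cc y a')"
proof (rule polyP[where c=1 and k=2])
  show "(\<lambda>y. cc y a * cc y a') \<in> borel_measurable \<nu>" using assms by simp
  fix y
  have "\<bar>cc y a * cc y a'\<bar> \<le> (S y + EE) * (S y + EE)"
    unfolding abs_mult using assms SE_nonneg by (intro mult_mono cc_bd) auto
  then show "\<bar>cc y a * cc y a'\<bar> \<le> 1 * (S y + EE) ^ 2" by (simp add: power2_eq_square)
qed

lemma mom4: assumes "a < m" "a' < m" "a'' < m" "a''' < m"
  shows "integrable P (\<lambda>y. cc y a * cc y a' * cc y a'' * cc y a''')"
proof (rule polyP[where c=1 and k=4])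
  show "(\<lambda>y. cc y a * cc y a' * cc y a'' * cc y a''') \<in> borel_measurable \<nu>" using assms by simp
  fix y
  have "\<bar>cc y a * cc y a' * cc y a'' * cc y a'''\<bar> \<le> (S y + EE) * (S y + EE) * (S y + EE) * (S y + EE)"
    unfolding abs_mult using assms SE_nonneg by (intro mult_mono cc_bd) auto
  then show "\<bar>cc y a * cc y a' * cc y a'' * cc y a'''\<bar> \<le> 1 * (S y + EE) ^ 4" by (simp add: power4_eq_xxxx mult_ac)
qed

definition "uu J y = (\<Sum>a<m. cc y a * J a)"

lemma uu_meas[measurable]: "uu J \<in> borel_measurable \<nu>"
  unfolding uu_def by (intro borel_measurable_sum borel_measurable_times cc_meas) auto

lemma uu_bd: "\<bar>uu J y\<bar> \<le> (\<Sum>a<m. \<bar>J a\<bar>) * (S y + EE)"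
proof -
  have "\<bar>uu J y\<bar> \<le> (\<Sum>a<m. \<bar>cc y a\<bar> * \<bar>J a\<bar>)"
    unfolding uu_def by (rule order_trans[OF sum_abs]) (simp add: abs_mult)
  also have "\<dots> \<le> (\<Sum>a<m. (S y + EE) * \<bar>J a\<bar>)"
    by (intro sum_mono mult_right_mono cc_bd) auto
  also have "\<dots> = (\<Sum>a<m. \<bar>J a\<bar>) * (S y + EE)" by (simp add: sum_distrib_right mult.commute)
  finally show ?thesis .
qed

lemma uu2_int: "integrable P (\<lambda>y. uu J1 y * uu J2 y)"
proof (rule polyP[where c="(\<Sum>a<m. \<bar>J1 a\<bar>) * (\<Sum>a<m. \<bar>J2 a\<bar>)" and k=2])
  show "(\<lambda>y. uu J1 y * uu J2 y) \<in> borel_measurable \<nu>" by simp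
  fix y
  have "\<bar>uu J1 y * uu J2 y\<bar> \<le> ((\<Sum>a<m. \<bar>J1 a\<bar>) * (S y + EE)) * ((\<Sum>a<m. \<bar>J2 a\<bar>) * (S y + EE))"
    unfolding abs_mult by (intro mult_mono uu_bd) (auto intro!: mult_nonneg_nonneg sum_nonneg SE_nonneg)
  then show "\<bar>uu J1 y * uu J2 y\<bar> \<le> (\<Sum>a<m. \<bar>J1 a\<bar>) * (\<Sum>a<m. \<bar>J2 a\<bar>) * (S y + EE) ^ 2"
    by (simp add: power2_eq_square mult_ac)
qed

lemma uu4_int: "integrable P (\<lambda>y. (uu J1 y * uu J2 y) * (uu J3 y * uu J4 y))"
proof (rule polyP[where c="(\<Sum>a<m. \<bar>J1 a\<bar>) * (\<Sum>a<m. \<bar>J2 a\<bar>) * ((\<Sum>a<m. \<bar>J3 a\<bar>) * (\<Sum>a<m. \<bar>J4 a\<bar>))" and k=4])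
  show "(\<lambda>y. (uu J1 y * uu J2 y) * (uu J3 y * uu J4 y)) \<in> borel_measurable \<nu>" by simp
  fix y
  have "\<bar>(uu J1 y * uu J2 y) * (uu J3 y * uu J4 y)\<bar> \<le>
     (((\<Sum>a<m. \<bar>J1 a\<bar>) * (S y + EE)) * ((\<Sum>a<m. \<bar>J2 a\<bar>) * (S y + EE))) *
     (((\<Sum>a<m. \<bar>J3 a\<bar>) * (S y + EE)) * ((\<Sum>a<m. \<bar>J4 a\<bar>) * (S y + EE)))"
    unfolding abs_mult by (intro mult_mono uu_bd) (auto intro!: mult_nonneg_nonneg sum_nonneg SE_nonneg)
  then show "\<bar>(uu J1 y * uu J2 y) * (uu J3 y * uu J4 y)\<bar> \<le> (\<Sum>a<m. \<bar>J1 a\<bar>) * (\<Sum>a<m. \<bar>J2 a\<bar>) * ((\<Sum>a<m. \<bar>J3 a\<bar>) * (\<Sum>a<m. \<bar>J4 a\<bar>)) * (S y + EE) ^ 4"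
    by (simp add: power4_eq_xxxx mult_ac)
qed

lemma cov_eq: "a < m \<Longrightarrow> a' < m \<Longrightarrow> suff_cov \<nu> t m h0 a a' = (\<integral>y. cc y a * cc y a' \<partial>P)"
  unfolding suff_cov_def cc_def eta_def P_def ..

lemma K_eq: "suff_K \<nu> t m h0 a a' a'' a''' = (\<integral>y. cc y a * cc y a' * cc y a'' * cc y a''' \<partial>P)"
  unfolding suff_K_def cc_def eta_def P_def ..

lemma uu2_expand: "uu J1 y * uu J2 y = (\<Sum>a<m. \<Sum>a'<m. (cc y a * cc y a') * (J1 a * J2 a'))"
  unfolding uu_def by (simp add: sum_product mult_ac)

lemma uu2_integral: "(\<integral>y. uu J1 y * uu J2 y \<partial>P) = (\<Sum>a<m. \<Sum>a'<m. suff_cov \<nu> t m h0 a a' * (J1 a * J2 a'))"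
proof -
  have i1: "integrable P (\<lambda>y. cc y a * cc y a' * (J1 a * J2 a'))" if "a < m" "a' < m" for a a'
    using mom2[OF that] by simp
  have "(\<integral>y. uu J1 y * uu J2 y \<partial>P) = (\<Sum>a<m. \<integral>y. (\<Sum>a'<m. cc y a * cc y a' * (J1 a * J2 a')) \<partial>P)"
    unfolding uu2_expand by (rule Bochner_Integration.integral_sum, rule Bochner_Integration.integrable_sum, rule i1) auto
  also have "\<dots> = (\<Sum>a<m. \<Sum>a'<m. \<integral>y. cc y a * cc y a' * (J1 a * J2 a') \<partial>P)"
    by (intro sum.cong refl, rule Bochner_Integration.integral_sum, rule i1) auto
  also have "\<dots> = (\<Sum>a<m. \<Sum>a'<m. suff_cov \<nu> t m h0 a a' * (J1 a * J2 a'))"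
    by (intro sum.cong refl) (simp add: cov_eq)
  finally show ?thesis .
qed

lemma uu4_expand: "(uu J1 y * uu J2 y) * (uu J3 y * uu J4 y) =
   (\<Sum>a<m. \<Sum>a'<m. \<Sum>a''<m. \<Sum>a'''<m. (cc y a * cc y a' * cc y a'' * cc y a''') * (J1 a * J2 a' * J3 a'' * J4 a'''))"
  unfolding uu2_expand unfolding sum_distrib_right unfolding sum_distrib_left
  by (intro sum.cong refl) (simp add: mult_ac)

lemma uu4_integral: "(\<integral>y. (uu J1 y * uu J2 y) * (uu J3 y * uu J4 y) \<partial>P) =
   (\<Sum>a<m. \<Sum>a'<m. \<Sum>a''<m. \<Sum>a'''<m. suff_K \<nu> t m h0 a a' a'' a''' * (J1 a * J2 a' * J3 a'' * J4 a'''))"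
proof -
  have i1: "integrable P (\<lambda>y. (cc y a * cc y a' * cc y a'' * cc y a''') * (J1 a * J2 a' * J3 a'' * J4 a'''))"
    if "a < m" "a' < m" "a'' < m" "a''' < m" for a a' a'' a'''
    using mom4[OF that] by simp
  let ?G = "\<lambda>a a' a'' a''' y. (cc y a * cc y a' * cc y a'' * cc y a''') * (J1 a * J2 a' * J3 a'' * J4 a''')"
  have "(\<integral>y. (\<Sum>a<m. \<Sum>a'<m. \<Sum>a''<m. \<Sum>a'''<m. ?G a a' a'' a''' y) \<partial>P) =
      (\<Sum>a<m. \<integral>y. (\<Sum>a'<m. \<Sum>a''<m. \<Sum>a'''<m. ?G a a' a'' a''' y) \<partial>P)"
    by (rule Bochner_Integration.integral_sum, (rule Bochner_Integration.integrable_sum)+, rule i1) auto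
  also have "\<dots> = (\<Sum>a<m. \<Sum>a'<m. \<integral>y. (\<Sum>a''<m. \<Sum>a'''<m. ?G a a' a'' a''' y) \<partial>P)"
    by (intro sum.cong refl, rule Bochner_Integration.integral_sum, (rule Bochner_Integration.integrable_sum)+, rule i1) auto
  also have "\<dots> = (\<Sum>a<m. \<Sum>a'<m. \<Sum>a''<m. \<integral>y. (\<Sum>a'''<m. ?G a a' a'' a''' y) \<partial>P)"
    by (intro sum.cong refl, rule Bochner_Integration.integral_sum, (rule Bochner_Integration.integrable_sum)+, rule i1) auto
  also have "\<dots> = (\<Sum>a<m. \<Sum>a'<m. \<Sum>a''<m. \<Sum>a'''<m. \<integral>y. ?G a a' a'' a''' y \<partial>P)"
    by (intro sum.cong refl, rule Bochner_Integration.integral_sum, rule i1) auto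
  also have "\<dots> = (\<Sum>a<m. \<Sum>a'<m. \<Sum>a''<m. \<Sum>a'''<m. suff_K \<nu> t m h0 a a' a'' a''' * (J1 a * J2 a' * J3 a'' * J4 a'''))"
    by (intro sum.cong refl) (simp add: K_eq)
  finally show ?thesis unfolding uu4_expand .
qed

lemma int_bt: assumes a: "a < m" shows "integrable \<nu> (\<lambda>y. exp (b y) * t y a)"
proof (rule Bochner_Integration.integrable_bound)
  show "integrable \<nu> (\<lambda>y. exp (b y + rr * S y) / rr)" using rr_int[of rr] rr_pos by simp
  show "(\<lambda>y. exp (b y) * t y a) \<in> borel_measurable \<nu>" using tmeas[OF a] by simp
  show "AE y in \<nu>. norm (exp (b y) * t y a) \<le> norm (exp (b y + rr * S y) / rr)"
  proof (intro AE_I2)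
    fix y
    have "rr * S y \<le> exp (rr * S y)" using exp_ge_add_one_self[of "rr * S y"] by linarith
    then have "rr * \<bar>t y a\<bar> \<le> exp (rr * S y)" using t_le_S[OF a, of y] rr_pos
      by (meson mult_left_mono less_imp_le order_trans)
    then have "\<bar>t y a\<bar> \<le> exp (rr * S y) / rr" using rr_pos by (simp add: field_simps)
    then have "exp (b y) * \<bar>t y a\<bar> \<le> exp (b y) * (exp (rr * S y) / rr)" by (intro mult_left_mono) auto
    then show "norm (exp (b y) * t y a) \<le> norm (exp (b y + rr * S y) / rr)"
      using rr_pos by (simp add: abs_mult exp_add)
  qed
qed

lemma loglik_deriv:
  assumes H0: "\<And>a. a < m \<Longrightarrow> H 0 a = h0 a"
    and HD: "\<And>a. a < m \<Longrightarrow> ((\<lambda>e. H e a) has_real_derivative J a) (at 0)"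
  shows "((\<lambda>e. dotn m (t y) (H e) - ln (\<integral>y'. exp (dotn m (t y') (H e)) \<partial>\<nu>)) has_real_derivative uu J y) (at 0)"
proof -
  have b0: "dotn m (t y') (H 0) = b y'" for y'
    unfolding dotn_def b_def by (intro sum.cong) (auto simp: H0)
  define D where "D = (\<integral>y'. exp (b y') * (\<Sum>a<m. t y' a * J a) \<partial>\<nu>)"
  have Zd: "((\<lambda>e. \<integral>y'. exp (dotn m (t y') (H e)) \<partial>\<nu>) has_real_derivative D) (at 0)"
    unfolding D_def by (rule Z_deriv[OF H0 HD])
  have phi0: "(\<integral>y'. exp (dotn m (t y') (H 0)) \<partial>\<nu>) = Z0" unfolding b0 Z0_def ..
  have lnd: "((\<lambda>e. ln (\<integral>y'. exp (dotn m (t y') (H e)) \<partial>\<nu>)) has_real_derivative (1 / Z0) * D) (at 0)"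
    using DERIV_chain2[OF DERIV_ln_divide Zd] Z0_pos unfolding phi0 by simp
  have dd: "((\<lambda>e. dotn m (t y) (H e)) has_real_derivative (\<Sum>a<m. t y a * J a)) (at 0)"
    unfolding dotn_def by (intro DERIV_sum DERIV_cmult HD) auto
  have eq: "(1 / Z0) * D = (\<Sum>a<m. eta a * J a)"
  proof -
    have "(\<Sum>a<m. eta a * J a) = (\<Sum>a<m. (\<integral>y'. exp (b y') * t y' a * (J a / Z0) \<partial>\<nu>))"
    proof (intro sum.cong refl)
      fix a assume "a \<in> {..<m}"
      then have a: "a < m" by simp
      have "eta a * J a = (\<integral>y'. exp (b y') / Z0 * t y' a \<partial>\<nu>) * J a"
        using eta_eq[OF a] intP_eq[OF tmeas[OF a]] by simp
      also have "\<dots> = (\<integral>y'. exp (b y') * t y' a * (J a / Z0) \<partial>\<nu>)"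
        by (simp add: field_simps)
      finally show "eta a * J a = (\<integral>y'. exp (b y') * t y' a * (J a / Z0) \<partial>\<nu>)" .
    qed
    also have "\<dots> = (\<integral>y'. (\<Sum>a<m. exp (b y') * t y' a * (J a / Z0)) \<partial>\<nu>)"
      using int_bt by (simp add: Bochner_Integration.integral_sum)
    also have "\<dots> = (\<integral>y'. (exp (b y') * (\<Sum>a<m. t y' a * J a)) / Z0 \<partial>\<nu>)"
      by (rule Bochner_Integration.integral_cong) (simp_all add: sum_distrib_left sum_divide_distrib mult_ac)
    also have "\<dots> = (1 / Z0) * D"
      unfolding D_def by simp
    finally show ?thesis by simp
  qed
  have "((\<lambda>e. dotn m (t y) (H e) - ln (\<integral>y'. exp (dotn m (t y') (H e)) \<partial>\<nu>)) has_real_derivative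
        (\<Sum>a<m. t y a * J a) - (1 / Z0) * D) (at 0)"
    by (rule DERIV_diff[OF dd lnd])
  moreover have "(\<Sum>a<m. t y a * J a) - (1 / Z0) * D = uu J y"
    unfolding eq uu_def cc_def by (simp add: sum_subtractf left_diff_distrib)
  ultimately show ?thesis by simp
qed

end

theorem mainTheorem17:
  fixes n :: "nat \<Rightarrow> nat" and L N :: nat and \<sigma> :: "real \<Rightarrow> real" and x :: "nat \<Rightarrow> real"
    and \<theta> :: "nat \<times> nat \<times> nat \<Rightarrow> real" and \<nu> :: "'y measure" and t :: "'y \<Rightarrow> nat \<Rightarrow> real"
    and i j k l :: "nat \<times> nat \<times> nat"
  assumes "L \<ge> 1"
    and "\<forall>m. 1 \<le> m \<and> m \<le> L \<longrightarrow> n m \<ge> 1"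
    and "\<forall>z. \<sigma> differentiable (at z)"
    and "\<forall>a < n L. (\<lambda>y. t y a) \<in> borel_measurable \<nu>"
    and "in_interior_coords (n L) (nat_param_space \<nu> t (n L)) (net_out n \<sigma> L x \<theta>)"
    and "N \<ge> 1"
    and "i \<in> params n L" and "j \<in> params n L" and "k \<in> params n L" and "l \<in> params n L"
  shows "\<bar>covar (PiM {..<N} (\<lambda>_. net_model \<nu> t n \<sigma> L x \<theta>))
              (\<lambda>ys. emp_fisher N \<nu> t n \<sigma> L x \<theta> ys i j)
              (\<lambda>ys. emp_fisher N \<nu> t n \<sigma> L x \<theta> ys k l)\<bar>
         \<le> 1 / real N
            * norm2n (n L) (jac_col n \<sigma> L x \<theta> i) * norm2n (n L) (jac_col n \<sigma> L x \<theta> j)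
            * norm2n (n L) (jac_col n \<sigma> L x \<theta> k) * norm2n (n L) (jac_col n \<sigma> L x \<theta> l)
            * frob4 (n L) (\<lambda>a b c d. suff_K \<nu> t (n L) (net_out n \<sigma> L x \<theta>) a b c d
                 - suff_cov \<nu> t (n L) (net_out n \<sigma> L x \<theta>) a b * suff_cov \<nu> t (n L) (net_out n \<sigma> L x \<theta>) c d)"
  (is "\<bar>?cov\<bar> \<le> ?rhs")
proof -
  interpret ef \<nu> t "n L" "net_out n \<sigma> L x \<theta>"
    by standard (use assms(4,5) in auto)
  define T where "T = (\<lambda>a b c d. suff_K \<nu> t (n L) (net_out n \<sigma> L x \<theta>) a b c d
                 - suff_cov \<nu> t (n L) (net_out n \<sigma> L x \<theta>) a b * suff_cov \<nu> t (n L) (net_out n \<sigma> L x \<theta>) c d)"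
  let ?J = "jac_col n \<sigma> L x \<theta>"
  have rhs_nn: "0 \<le> ?rhs"
    unfolding norm2n_def frob4_def by (intro mult_nonneg_nonneg) (auto intro!: sum_nonneg)
  show ?thesis
  proof (cases "emeasure \<nu> (space \<nu>) = 0")
    case True
    let ?P = "net_model \<nu> t n \<sigma> L x \<theta>"
    have sp: "space ?P = space \<nu>"
      unfolding net_model_def expfam_measure_def by simp
    have aeF: "AE y in \<nu>. False" using True by (subst AE_iff_measurable[of "space \<nu>"]) auto
    have dm: "(\<lambda>y. ennreal (expfam_density \<nu> t (n L) (net_out n \<sigma> L x \<theta>) y)) \<in> borel_measurable \<nu>"
      unfolding expfam_density_def by simp
    have "emeasure ?P (space ?P) = (\<integral>\<^sup>+ y. ennreal (expfam_density \<nu> t (n L) (net_out n \<sigma> L x \<theta>) y) * indicator (space \<nu>) y \<partial>\<nu>)"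
      unfolding sp unfolding net_model_def expfam_measure_def by (rule emeasure_density[OF dm]) simp
    also have "\<dots> = (\<integral>\<^sup>+ y. 0 \<partial>\<nu>)"
      by (rule nn_integral_cong_AE) (rule eventually_mono[OF aeF], simp)
    finally have P0: "emeasure ?P (space ?P) = 0" by simp
    have fin: "finite_measure ?P" using P0 by (intro finite_measureI) simp
    interpret product_sigma_finite "\<lambda>_. ?P"
      using fin by (simp add: product_sigma_finite_def finite_measure.sigma_finite_measure)
    have "emeasure (PiM {..<N} (\<lambda>_. ?P)) (space (PiM {..<N} (\<lambda>_. ?P))) = (\<Prod>s<N. emeasure ?P (space ?P))"
      unfolding space_PiM by (rule emeasure_PiM) auto
    also have "\<dots> = 0" unfolding P0 using assms(6) by simp
    finally have "AE ys in PiM {..<N} (\<lambda>_. ?P). False"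
      by (subst AE_iff_measurable[of "space (PiM {..<N} (\<lambda>_. ?P))"]) auto
    then have "?cov = 0" unfolding covar_def by (intro integral_eq_zero_AE) auto
    then show ?thesis using rhs_nn by simp
  next
    case False
    interpret ef_pos \<nu> t "n L" "net_out n \<sigma> L x \<theta>"
      by standard (rule False)
    have gp: "pderiv_param (\<lambda>\<theta>'. loglik \<nu> t n \<sigma> L x \<theta>' y) \<theta> p = uu (?J p) y" for p y
    proof -
      let ?H = "\<lambda>e. net_out n \<sigma> L x (\<theta>(p := \<theta> p + e))"
      have ll: "loglik \<nu> t n \<sigma> L x (\<theta>(p := \<theta> p + e)) y =
           dotn (n L) (t y) (?H e) - ln (\<integral>y'. exp (dotn (n L) (t y') (?H e)) \<partial>\<nu>)" for e
        unfolding loglik_def expfam_density_def log_partition_def by simp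
      have "((\<lambda>e. dotn (n L) (t y) (?H e) - ln (\<integral>y'. exp (dotn (n L) (t y') (?H e)) \<partial>\<nu>)) has_real_derivative uu (?J p) y) (at 0)"
        by (rule loglik_deriv) (auto intro: net_deriv[OF assms(3)])
      then show ?thesis unfolding pderiv_param_def ll by (rule DERIV_imp_deriv)
    qed
    have efe: "emp_fisher N \<nu> t n \<sigma> L x \<theta> ys p q = (1 / real N) * (\<Sum>s<N. uu (?J p) (ys s) * uu (?J q) (ys s))" for ys p q
      unfolding emp_fisher_def gp ..
    have PP: "net_model \<nu> t n \<sigma> L x \<theta> = P" unfolding net_model_def P_def ..
    have "?cov = (1 / real N) * ((\<integral>y. (uu (?J i) y * uu (?J j) y) * (uu (?J k) y * uu (?J l) y) \<partial>P)
                  - (\<integral>y. uu (?J i) y * uu (?J j) y \<partial>P) * (\<integral>y. uu (?J k) y * uu (?J l) y \<partial>P))"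
      unfolding efe PP by (rule cov_iid[OF prob_P assms(6) uu2_int uu2_int uu4_int])
    also have "\<dots> = (1 / real N) * (\<Sum>a<n L. \<Sum>b<n L. \<Sum>c<n L. \<Sum>d<n L. T a b c d * (?J i a * ?J j b * ?J k c * ?J l d))"
    proof -
      have "(\<integral>y. uu (?J i) y * uu (?J j) y \<partial>P) * (\<integral>y. uu (?J k) y * uu (?J l) y \<partial>P) =
         (\<Sum>a<n L. \<Sum>b<n L. \<Sum>c<n L. \<Sum>d<n L. suff_cov \<nu> t (n L) (net_out n \<sigma> L x \<theta>) a b * suff_cov \<nu> t (n L) (net_out n \<sigma> L x \<theta>) c d * (?J i a * ?J j b * ?J k c * ?J l d))"
        unfolding uu2_integral unfolding sum_distrib_right unfolding sum_distrib_left
        by (intro sum.cong refl) (simp add: mult_ac)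
      then show ?thesis
        unfolding uu4_integral T_def by (simp add: sum_subtractf left_diff_distrib)
    qed
    finally have "\<bar>?cov\<bar> = (1 / real N) * \<bar>\<Sum>a<n L. \<Sum>b<n L. \<Sum>c<n L. \<Sum>d<n L. T a b c d * (?J i a * ?J j b * ?J k c * ?J l d)\<bar>"
      by (simp add: abs_mult)
    also have "\<dots> \<le> (1 / real N) * (norm2n (n L) (?J i) * norm2n (n L) (?J j) * norm2n (n L) (?J k) * norm2n (n L) (?J l) * frob4 (n L) T)"
      by (intro mult_left_mono tensor_cs) auto
    finally show ?thesis unfolding T_def by (simp add: mult_ac)
  qed
qed

end
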